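(* Let $\mathbb{E}$ be a regular category, $\Sigma$ a fibrational class of split epimorphisms, and suppose $\mathbb{E}$ is a $\Sigma$-Mal'tsev category. Let $(f,s)\colon X\rightleftarrows Y$ and $(f',s')\colon X'\rightleftarrows Y'$ be split epimorphisms and $x\colon X\to X'$, $y\colon Y\to Y'$ regular epimorphisms with $f'x=yf$ and $xs=s'y$. If $(f,s)\in\Sigma$, then the square $f'x=yf$ is a regular pushout, i.e. the induced morphism $(f,x)\colon X\to Y\times_{Y'}X'$ into the pullback of $f'$ along $y$ is a regular epimorphism.
   Context: A split epimorphism is a pair $(f,s)$ with $fs=1$. A class $\Sigma$ of split epimorphisms is fibrational if it contains all split epimorphisms $(f,s)$ with $f$ invertible and is stable under pullback along any morphism. A pair of morphisms with common codomain $Z$ is jointly extremally epic if it factors jointly through no non-invertible monomorphism into $Z$. $\mathbb{E}$ is $\Sigma$-Mal'tsev if for every split epimorphism $(f,s)\colon X\rightleftarrows Y$ in $\Sigma$ and every split epimorphism $(g,t)$ with $g\colon Y'\to Y$, letting $X'=Y'\times_YX$, $s'=(1_{Y'},sg)$, $\bar t=(tf,1_X)$, the pair $(s',\bar t)$ is jointly extremally epic. *)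

theory Defs
  imports Main
begin

record ('o, 'a) cat =
  Ob   :: "'o set"
  Ar   :: "'a set"
  Dom  :: "'a \<Rightarrow> 'o"
  Cod  :: "'a \<Rightarrow> 'o"
  Idt  :: "'o \<Rightarrow> 'a"
  Comp :: "'a \<Rightarrow> 'a \<Rightarrow> 'a"   (* Comp C g f = g \<circ> f, defined when Cod f = Dom g *)

definition hom :: "('o, 'a) cat \<Rightarrow> 'o \<Rightarrow> 'o \<Rightarrow> 'a set" where
  "hom C a b = {f \<in> Ar C. Dom C f = a \<and> Cod C f = b}"

definition category :: "('o, 'a) cat \<Rightarrow> bool" where
  "category C \<longleftrightarrow>
     (\<forall>f \<in> Ar C. Dom C f \<in> Ob C \<and> Cod C f \<in> Ob C) \<and>
     (\<forall>a \<in> Ob C. Idt C a \<in> hom C a a) \<and>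
     (\<forall>f \<in> Ar C. \<forall>g \<in> Ar C. Cod C f = Dom C g \<longrightarrow>
         Comp C g f \<in> hom C (Dom C f) (Cod C g)) \<and>
     (\<forall>f \<in> Ar C. \<forall>g \<in> Ar C. \<forall>h \<in> Ar C. Cod C f = Dom C g \<longrightarrow> Cod C g = Dom C h \<longrightarrow>
         Comp C h (Comp C g f) = Comp C (Comp C h g) f) \<and>
     (\<forall>f \<in> Ar C. Comp C f (Idt C (Dom C f)) = f \<and> Comp C (Idt C (Cod C f)) f = f)"

definition iso :: "('o, 'a) cat \<Rightarrow> 'a \<Rightarrow> bool" where
  "iso C f \<longleftrightarrow> f \<in> Ar C \<and>
     (\<exists>g \<in> hom C (Cod C f) (Dom C f).
        Comp C g f = Idt C (Dom C f) \<and> Comp C f g = Idt C (Cod C f))"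

definition mono :: "('o, 'a) cat \<Rightarrow> 'a \<Rightarrow> bool" where
  "mono C m \<longleftrightarrow> m \<in> Ar C \<and>
     (\<forall>g \<in> Ar C. \<forall>h \<in> Ar C. Dom C g = Dom C h \<longrightarrow> Cod C g = Dom C m \<longrightarrow> Cod C h = Dom C m \<longrightarrow>
        Comp C m g = Comp C m h \<longrightarrow> g = h)"

definition terminal :: "('o, 'a) cat \<Rightarrow> 'o \<Rightarrow> bool" where
  "terminal C t \<longleftrightarrow> t \<in> Ob C \<and> (\<forall>a \<in> Ob C. \<exists>!f. f \<in> hom C a t)"

definition is_pullback :: "('o, 'a) cat \<Rightarrow> 'a \<Rightarrow> 'a \<Rightarrow> 'a \<Rightarrow> 'a \<Rightarrow> bool" where
  "is_pullback C f g p1 p2 \<longleftrightarrow>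
     f \<in> Ar C \<and> g \<in> Ar C \<and> p1 \<in> Ar C \<and> p2 \<in> Ar C \<and>
     Cod C f = Cod C g \<and> Dom C p1 = Dom C p2 \<and>
     Cod C p1 = Dom C f \<and> Cod C p2 = Dom C g \<and>
     Comp C f p1 = Comp C g p2 \<and>
     (\<forall>W \<in> Ob C. \<forall>a \<in> hom C W (Dom C f). \<forall>b \<in> hom C W (Dom C g).
        Comp C f a = Comp C g b \<longrightarrow>
        (\<exists>!u. u \<in> hom C W (Dom C p1) \<and> Comp C p1 u = a \<and> Comp C p2 u = b))"

definition has_pullbacks :: "('o, 'a) cat \<Rightarrow> bool" where
  "has_pullbacks C \<longleftrightarrow>
     (\<forall>f \<in> Ar C. \<forall>g \<in> Ar C. Cod C f = Cod C g \<longrightarrow> (\<exists>p1 p2. is_pullback C f g p1 p2))"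

definition finitely_complete :: "('o, 'a) cat \<Rightarrow> bool" where
  "finitely_complete C \<longleftrightarrow> (\<exists>t. terminal C t) \<and> has_pullbacks C"

definition is_coequalizer :: "('o, 'a) cat \<Rightarrow> 'a \<Rightarrow> 'a \<Rightarrow> 'a \<Rightarrow> bool" where
  "is_coequalizer C u v q \<longleftrightarrow>
     u \<in> Ar C \<and> v \<in> Ar C \<and> q \<in> Ar C \<and>
     Dom C u = Dom C v \<and> Cod C u = Cod C v \<and> Dom C q = Cod C u \<and>
     Comp C q u = Comp C q v \<and>
     (\<forall>h \<in> Ar C. Dom C h = Cod C u \<longrightarrow> Comp C h u = Comp C h v \<longrightarrow>
        (\<exists>!k. k \<in> hom C (Cod C q) (Cod C h) \<and> Comp C k q = h))"

definition regular_epi :: "('o, 'a) cat \<Rightarrow> 'a \<Rightarrow> bool" where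
  "regular_epi C q \<longleftrightarrow> (\<exists>u v. is_coequalizer C u v q)"

definition regular_category :: "('o, 'a) cat \<Rightarrow> bool" where
  "regular_category C \<longleftrightarrow> category C \<and> finitely_complete C \<and>
     (\<forall>f \<in> Ar C. \<forall>k1 k2. is_pullback C f f k1 k2 \<longrightarrow> (\<exists>q. is_coequalizer C k1 k2 q)) \<and>
     (\<forall>f g p1 p2. is_pullback C f g p1 p2 \<longrightarrow> regular_epi C g \<longrightarrow> regular_epi C p1)"

definition split_epi :: "('o, 'a) cat \<Rightarrow> 'a \<Rightarrow> 'a \<Rightarrow> 'o \<Rightarrow> 'o \<Rightarrow> bool" where
  "split_epi C f s X Y \<longleftrightarrow> f \<in> hom C X Y \<and> s \<in> hom C Y X \<and> Comp C f s = Idt C Y"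

definition fibrational :: "('o, 'a) cat \<Rightarrow> ('a \<times> 'a) set \<Rightarrow> bool" where
  "fibrational C \<Sigma> \<longleftrightarrow>
     (\<forall>(f, s) \<in> \<Sigma>. \<exists>X Y. split_epi C f s X Y) \<and>
     (\<forall>f s X Y. split_epi C f s X Y \<longrightarrow> iso C f \<longrightarrow> (f, s) \<in> \<Sigma>) \<and>
     (\<forall>f s X Y g p1 p2 s'. (f, s) \<in> \<Sigma> \<longrightarrow> split_epi C f s X Y \<longrightarrow>
        g \<in> Ar C \<longrightarrow> Cod C g = Y \<longrightarrow> is_pullback C g f p1 p2 \<longrightarrow>
        s' \<in> hom C (Dom C g) (Dom C p1) \<longrightarrow>
        Comp C p1 s' = Idt C (Dom C g) \<longrightarrow> Comp C p2 s' = Comp C s g \<longrightarrow>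
        (p1, s') \<in> \<Sigma>)"

definition jointly_extremally_epic :: "('o, 'a) cat \<Rightarrow> 'a \<Rightarrow> 'a \<Rightarrow> bool" where
  "jointly_extremally_epic C a b \<longleftrightarrow>
     a \<in> Ar C \<and> b \<in> Ar C \<and> Cod C a = Cod C b \<and>
     (\<forall>m. mono C m \<longrightarrow> Cod C m = Cod C a \<longrightarrow>
        (\<exists>a' \<in> hom C (Dom C a) (Dom C m). \<exists>b' \<in> hom C (Dom C b) (Dom C m).
            Comp C m a' = a \<and> Comp C m b' = b) \<longrightarrow> iso C m)"

definition sigma_maltsev :: "('o, 'a) cat \<Rightarrow> ('a \<times> 'a) set \<Rightarrow> bool" where
  "sigma_maltsev C \<Sigma> \<longleftrightarrow>
     (\<forall>f s X Y g t Y' p1 p2 s' tb.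
        (f, s) \<in> \<Sigma> \<longrightarrow> split_epi C f s X Y \<longrightarrow> split_epi C g t Y' Y \<longrightarrow>
        is_pullback C g f p1 p2 \<longrightarrow>
        s' \<in> hom C Y' (Dom C p1) \<longrightarrow> Comp C p1 s' = Idt C Y' \<longrightarrow> Comp C p2 s' = Comp C s g \<longrightarrow>
        tb \<in> hom C X (Dom C p1) \<longrightarrow> Comp C p1 tb = Comp C t f \<longrightarrow> Comp C p2 tb = Idt C X \<longrightarrow>
        jointly_extremally_epic C s' tb)"

end

theory Submission
  imports Defs
begin

context fixes C :: "('o,'a) cat" assumes cat: "category C"
begin

lemma homD: "f \<in> hom C a b \<Longrightarrow> f \<in> Ar C \<and> Dom C f = a \<and> Cod C f = b"
  by (simp add: hom_def)

lemma hom_obs: "f \<in> hom C a b \<Longrightarrow> a \<in> Ob C \<and> b \<in> Ob C"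
  using cat unfolding category_def hom_def by auto

lemma comp_in: "f \<in> hom C a b \<Longrightarrow> g \<in> hom C b c \<Longrightarrow> Comp C g f \<in> hom C a c"
  using cat unfolding category_def hom_def by auto

lemma assoc: "f \<in> hom C a b \<Longrightarrow> g \<in> hom C b c \<Longrightarrow> h \<in> hom C c d \<Longrightarrow>
   Comp C h (Comp C g f) = Comp C (Comp C h g) f"
  using cat unfolding category_def hom_def by auto

lemma idr: "f \<in> hom C a b \<Longrightarrow> Comp C f (Idt C a) = f"
  using cat unfolding category_def hom_def by auto

lemma idl: "f \<in> hom C a b \<Longrightarrow> Comp C (Idt C b) f = f"
  using cat unfolding category_def hom_def by auto

lemma id_hom: "a \<in> Ob C \<Longrightarrow> Idt C a \<in> hom C a a"
  using cat unfolding category_def by auto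

lemma pbD: "is_pullback C f g p1 p2 \<Longrightarrow>
  f \<in> hom C (Dom C f) (Cod C f) \<and> g \<in> hom C (Dom C g) (Cod C f) \<and>
  p1 \<in> hom C (Dom C p1) (Dom C f) \<and> p2 \<in> hom C (Dom C p1) (Dom C g) \<and>
  Comp C f p1 = Comp C g p2"
  unfolding is_pullback_def hom_def by auto

lemma pb_ex: "is_pullback C f g p1 p2 \<Longrightarrow> a \<in> hom C W (Dom C f) \<Longrightarrow> b \<in> hom C W (Dom C g)
  \<Longrightarrow> Comp C f a = Comp C g b \<Longrightarrow> \<exists>w \<in> hom C W (Dom C p1). Comp C p1 w = a \<and> Comp C p2 w = b"
  unfolding is_pullback_def using hom_obs by metis

lemma pb_uniq: "is_pullback C f g p1 p2 \<Longrightarrow> w \<in> hom C W (Dom C p1) \<Longrightarrow> w' \<in> hom C W (Dom C p1)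
  \<Longrightarrow> Comp C p1 w = Comp C p1 w' \<Longrightarrow> Comp C p2 w = Comp C p2 w' \<Longrightarrow> w = w'"
proof -
  assume pb: "is_pullback C f g p1 p2" and w: "w \<in> hom C W (Dom C p1)" and w': "w' \<in> hom C W (Dom C p1)"
    and e1: "Comp C p1 w = Comp C p1 w'" and e2: "Comp C p2 w = Comp C p2 w'"
  have d: "f \<in> hom C (Dom C f) (Cod C f)" "g \<in> hom C (Dom C g) (Cod C f)"
    "p1 \<in> hom C (Dom C p1) (Dom C f)" "p2 \<in> hom C (Dom C p1) (Dom C g)" "Comp C f p1 = Comp C g p2"
    using pbD[OF pb] by auto
  have a: "Comp C p1 w \<in> hom C W (Dom C f)" using comp_in[OF w d(3)] .
  have b: "Comp C p2 w \<in> hom C W (Dom C g)" using comp_in[OF w d(4)] .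
  have "Comp C f (Comp C p1 w) = Comp C g (Comp C p2 w)"
    using assoc[OF w d(3) d(1)] assoc[OF w d(4) d(2)] d(5) by simp
  then have "\<exists>!u. u \<in> hom C W (Dom C p1) \<and> Comp C p1 u = Comp C p1 w \<and> Comp C p2 u = Comp C p2 w"
    using pb a b hom_obs[OF w] unfolding is_pullback_def by blast
  then show ?thesis using w w' e1 e2 by metis
qed

lemma epi: "regular_epi C e \<Longrightarrow> e \<in> hom C a b \<Longrightarrow> g \<in> hom C b c \<Longrightarrow> h \<in> hom C b c
  \<Longrightarrow> Comp C g e = Comp C h e \<Longrightarrow> g = h"
proof -
  assume r: "regular_epi C e" and e: "e \<in> hom C a b" and g: "g \<in> hom C b c" and h: "h \<in> hom C b c"
    and eq: "Comp C g e = Comp C h e"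
  obtain u v where co: "is_coequalizer C u v e" using r unfolding regular_epi_def by blast
  have u: "u \<in> hom C (Dom C u) a" and v: "v \<in> hom C (Dom C u) a"
    using co e unfolding is_coequalizer_def hom_def by auto
  have ge: "Comp C g e \<in> hom C a c" using comp_in[OF e g] .
  have "Comp C (Comp C g e) u = Comp C (Comp C g e) v"
    using assoc[OF u e g] assoc[OF v e g] co unfolding is_coequalizer_def by metis
  moreover have "Comp C g e \<in> Ar C" "Dom C (Comp C g e) = Cod C u" using ge co e
    unfolding is_coequalizer_def hom_def by auto
  ultimately have "\<exists>!k. k \<in> hom C (Cod C e) (Cod C (Comp C g e)) \<and> Comp C k e = Comp C g e"
    using co unfolding is_coequalizer_def by blast
  moreover have "Cod C e = b" "Cod C (Comp C g e) = c" using e ge by (auto simp: hom_def)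
  ultimately show ?thesis using g h eq by metis
qed

lemma mono_pb: "is_pullback C g m p1 p2 \<Longrightarrow> mono C m \<Longrightarrow> mono C p1"
proof -
  assume pb: "is_pullback C g m p1 p2" and mm: "mono C m"
  have d: "g \<in> hom C (Dom C g) (Cod C g)" "m \<in> hom C (Dom C m) (Cod C g)"
    "p1 \<in> hom C (Dom C p1) (Dom C g)" "p2 \<in> hom C (Dom C p1) (Dom C m)" "Comp C g p1 = Comp C m p2"
    using pbD[OF pb] by auto
  show ?thesis unfolding mono_def
  proof (intro conjI ballI impI)
    show "p1 \<in> Ar C" using d(3) by (simp add: hom_def)
    fix a b assume a: "a \<in> Ar C" and b: "b \<in> Ar C" and dd: "Dom C a = Dom C b"
      and ca: "Cod C a = Dom C p1" and cb: "Cod C b = Dom C p1" and e: "Comp C p1 a = Comp C p1 b"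
    have ah: "a \<in> hom C (Dom C a) (Dom C p1)" and bh: "b \<in> hom C (Dom C a) (Dom C p1)"
      using a b dd ca cb by (auto simp: hom_def)
    have "Comp C m (Comp C p2 a) = Comp C m (Comp C p2 b)"
      using assoc[OF ah d(4) d(2)] assoc[OF bh d(4) d(2)] assoc[OF ah d(3) d(1)] assoc[OF bh d(3) d(1)] d(5) e
      by simp
    moreover have "Comp C p2 a \<in> hom C (Dom C a) (Dom C m)" "Comp C p2 b \<in> hom C (Dom C a) (Dom C m)"
      using comp_in[OF ah d(4)] comp_in[OF bh d(4)] by auto
    ultimately have "Comp C p2 a = Comp C p2 b" using mm unfolding mono_def hom_def by auto
    then show "a = b" using pb_uniq[OF pb ah bh e] by simp
  qed
qed

lemma regepi_mono_iso: "regular_epi C e \<Longrightarrow> e \<in> hom C a b \<Longrightarrow> mono C m \<Longrightarrow> m \<in> hom C c b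
  \<Longrightarrow> k \<in> hom C a c \<Longrightarrow> Comp C m k = e \<Longrightarrow> iso C m"
proof -
  assume r: "regular_epi C e" and e: "e \<in> hom C a b" and mm: "mono C m" and m: "m \<in> hom C c b"
    and k: "k \<in> hom C a c" and mk: "Comp C m k = e"
  obtain u v where co: "is_coequalizer C u v e" using r unfolding regular_epi_def by blast
  have u: "u \<in> hom C (Dom C u) a" and v: "v \<in> hom C (Dom C u) a"
    using co e unfolding is_coequalizer_def hom_def by auto
  have "Comp C m (Comp C k u) = Comp C m (Comp C k v)"
    using assoc[OF u k m] assoc[OF v k m] mk co unfolding is_coequalizer_def by metis
  moreover have "Comp C k u \<in> hom C (Dom C u) c" "Comp C k v \<in> hom C (Dom C u) c"
    using comp_in[OF u k] comp_in[OF v k] by auto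
  ultimately have kuv: "Comp C k u = Comp C k v" using mm m unfolding mono_def hom_def by auto
  have "k \<in> Ar C" "Dom C k = Cod C u" using k u by (auto simp: hom_def)
  then have "\<exists>!k'. k' \<in> hom C (Cod C e) (Cod C k) \<and> Comp C k' e = k"
    using co kuv unfolding is_coequalizer_def by blast
  moreover have "Cod C e = b" "Cod C k = c" using e k by (auto simp: hom_def)
  ultimately obtain k' where k': "k' \<in> hom C b c" "Comp C k' e = k" by metis
  have bo: "b \<in> Ob C" "c \<in> Ob C" using hom_obs[OF m] by auto
  have mk': "Comp C m k' \<in> hom C b b" using comp_in[OF k'(1) m] .
  have "Comp C (Comp C m k') e = Comp C (Idt C b) e"
    using assoc[OF e k'(1) m] k'(2) mk idl[OF e] by simp
  then have 1: "Comp C m k' = Idt C b" using epi[OF r e mk' id_hom[OF bo(1)]] by simp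
  have "Comp C m (Comp C k' m) = Comp C m (Idt C c)"
    using assoc[OF m k'(1) m] 1 idl[OF m] idr[OF m] by simp
  moreover have "Comp C k' m \<in> hom C c c" using comp_in[OF m k'(1)] .
  ultimately have 2: "Comp C k' m = Idt C c" using mm m id_hom[OF bo(2)] unfolding mono_def hom_def by auto
  show ?thesis unfolding iso_def using m k'(1) 1 2 by (auto simp: hom_def)
qed

lemma regepi_iso_comp: "regular_epi C q \<Longrightarrow> q \<in> hom C a b \<Longrightarrow> iso C m \<Longrightarrow> m \<in> hom C b c
  \<Longrightarrow> regular_epi C (Comp C m q)"
proof -
  assume r: "regular_epi C q" and q: "q \<in> hom C a b" and im: "iso C m" and m: "m \<in> hom C b c"
  obtain u v where co: "is_coequalizer C u v q" using r unfolding regular_epi_def by blast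
  have u: "u \<in> hom C (Dom C u) a" and v: "v \<in> hom C (Dom C u) a"
    using co q unfolding is_coequalizer_def hom_def by auto
  obtain mi where mi: "mi \<in> hom C c b" "Comp C mi m = Idt C b" "Comp C m mi = Idt C c"
    using im m unfolding iso_def hom_def by auto
  have mq: "Comp C m q \<in> hom C a c" using comp_in[OF q m] .
  have "is_coequalizer C u v (Comp C m q)"
    unfolding is_coequalizer_def
  proof (intro conjI ballI impI)
    show "u \<in> Ar C" "v \<in> Ar C" "Comp C m q \<in> Ar C" "Dom C u = Dom C v" "Cod C u = Cod C v"
      "Dom C (Comp C m q) = Cod C u" using co mq u by (auto simp: is_coequalizer_def hom_def)
    show "Comp C (Comp C m q) u = Comp C (Comp C m q) v"
      using assoc[OF u q m, symmetric] assoc[OF v q m, symmetric] co unfolding is_coequalizer_def by metis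
    fix h assume h: "h \<in> Ar C" "Dom C h = Cod C u" "Comp C h u = Comp C h v"
    then obtain k where k: "k \<in> hom C (Cod C q) (Cod C h)" "Comp C k q = h"
      using co unfolding is_coequalizer_def by blast
    have kb: "k \<in> hom C b (Cod C h)" using k q by (simp add: hom_def)
    have kmi: "Comp C k mi \<in> hom C c (Cod C h)" using comp_in[OF mi(1) kb] .
    have eq: "Comp C (Comp C k mi) (Comp C m q) = h"
      using assoc[OF q m kmi] assoc[OF m mi(1) kb] mi(2) idr[OF kb] k(2) by simp
    show "\<exists>!k'. k' \<in> hom C (Cod C (Comp C m q)) (Cod C h) \<and> Comp C k' (Comp C m q) = h"
    proof (rule ex1I[where a="Comp C k mi"])
      show "Comp C k mi \<in> hom C (Cod C (Comp C m q)) (Cod C h) \<and> Comp C (Comp C k mi) (Comp C m q) = h"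
        using kmi eq mq by (simp add: hom_def)
      fix k' assume k': "k' \<in> hom C (Cod C (Comp C m q)) (Cod C h) \<and> Comp C k' (Comp C m q) = h"
      then have k'c: "k' \<in> hom C c (Cod C h)" using mq by (simp add: hom_def)
      have km: "Comp C k' m \<in> hom C b (Cod C h)" using comp_in[OF m k'c] .
      have "Comp C (Comp C k' m) q = Comp C k q" using assoc[OF q m k'c] k' k(2) by simp
      then have "Comp C k' m = k" using epi[OF r q km kb] by simp
      then show "k' = Comp C k mi" using assoc[OF mi(1) m k'c] mi(3) idr[OF k'c] by simp
    qed
  qed
  then show ?thesis unfolding regular_epi_def by blast
qed

end

lemma regcat_pb: "regular_category C \<Longrightarrow> f \<in> Ar C \<Longrightarrow> g \<in> Ar C \<Longrightarrow> Cod C f = Cod C g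
  \<Longrightarrow> \<exists>p1 p2. is_pullback C f g p1 p2"
  unfolding regular_category_def finitely_complete_def has_pullbacks_def by blast

lemma regcat_stab: "regular_category C \<Longrightarrow> is_pullback C f g p1 p2 \<Longrightarrow> regular_epi C g \<Longrightarrow> regular_epi C p1"
  unfolding regular_category_def by blast

lemma image_fact:
  assumes rc: "regular_category C" and u: "u \<in> hom C X P"
  shows "\<exists>I q m. q \<in> hom C X I \<and> m \<in> hom C I P \<and> regular_epi C q \<and> mono C m \<and> Comp C m q = u"
proof -
  have cat: "category C" using rc unfolding regular_category_def by simp
  note homD = homD[OF cat] and comp_in = comp_in[OF cat] and assoc = assoc[OF cat]
    and pbD = pbD[OF cat] and pb_ex = pb_ex[OF cat] and epi = epi[OF cat]
  have uA: "u \<in> Ar C" using u by (simp add: hom_def)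
  obtain k1 k2 where kp: "is_pullback C u u k1 k2" using regcat_pb[OF rc uA uA] by blast
  obtain q where co: "is_coequalizer C k1 k2 q" using rc kp uA unfolding regular_category_def by blast
  have kd: "k1 \<in> hom C (Dom C k1) X" "k2 \<in> hom C (Dom C k1) X" "Comp C u k1 = Comp C u k2"
    using pbD[OF kp] u by (auto simp: hom_def)
  define I where "I = Cod C q"
  have q: "q \<in> hom C X I" using co kd unfolding is_coequalizer_def hom_def I_def by auto
  have rq: "regular_epi C q" using co unfolding regular_epi_def by blast
  have "Dom C u = Cod C k1" using u kd by (auto simp: hom_def)
  then have "\<exists>!m. m \<in> hom C (Cod C q) (Cod C u) \<and> Comp C m q = u"
    using co uA kd unfolding is_coequalizer_def by blast
  then obtain m where m: "m \<in> hom C I P" "Comp C m q = u" using u I_def by (auto simp: hom_def)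
  have "mono C m" unfolding mono_def
  proof (intro conjI ballI impI)
    show "m \<in> Ar C" using m by (simp add: hom_def)
    fix g h assume g: "g \<in> Ar C" and h: "h \<in> Ar C" and dd: "Dom C g = Dom C h"
      and cg: "Cod C g = Dom C m" and ch: "Cod C h = Dom C m" and e: "Comp C m g = Comp C m h"
    define W where "W = Dom C g"
    have gh: "g \<in> hom C W I" "h \<in> hom C W I" using g h dd cg ch m W_def by (auto simp: hom_def)
    have qA: "q \<in> Ar C" using q by (simp add: hom_def)
    obtain qa g' where pa: "is_pullback C g q qa g'"
      using regcat_pb[OF rc g qA] gh q by (auto simp: hom_def)
    have rqa: "regular_epi C qa" using regcat_stab[OF rc pa rq] .
    define A where "A = Dom C qa"
    have pad: "qa \<in> hom C A W" "g' \<in> hom C A X" "Comp C g qa = Comp C q g'"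
      using pbD[OF pa] gh q A_def W_def by (auto simp: hom_def)
    have hqa: "Comp C h qa \<in> hom C A I" using comp_in[OF pad(1) gh(2)] .
    obtain qb h' where pb: "is_pullback C (Comp C h qa) q qb h'"
    proof -
      have "Comp C h qa \<in> Ar C" "Cod C (Comp C h qa) = Cod C q" using hqa q by (auto simp: hom_def)
      then show ?thesis using regcat_pb[OF rc _ qA] that by blast
    qed
    have rqb: "regular_epi C qb" using regcat_stab[OF rc pb rq] .
    define B where "B = Dom C qb"
    have pbd: "qb \<in> hom C B A" "h' \<in> hom C B X" "Comp C (Comp C h qa) qb = Comp C q h'"
      using pbD[OF pb] hqa q B_def by (auto simp: hom_def)
    have g'qb: "Comp C g' qb \<in> hom C B X" using comp_in[OF pbd(1) pad(2)] .
    have "Comp C u (Comp C g' qb) = Comp C u h'"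
    proof -
      have "Comp C u (Comp C g' qb) = Comp C m (Comp C q (Comp C g' qb))"
        using assoc[OF g'qb q m(1)] m(2) by simp
      also have "\<dots> = Comp C m (Comp C (Comp C g qa) qb)"
        using assoc[OF pbd(1) pad(2) q] pad(3) by simp
      also have "\<dots> = Comp C (Comp C m g) (Comp C qa qb)"
        using assoc[OF pbd(1) pad(1) gh(1)] assoc[OF comp_in[OF pbd(1) pad(1)] gh(1) m(1)] by simp
      also have "\<dots> = Comp C (Comp C m h) (Comp C qa qb)" using e by simp
      also have "\<dots> = Comp C m (Comp C (Comp C h qa) qb)"
        using assoc[OF pbd(1) pad(1) gh(2)] assoc[OF comp_in[OF pbd(1) pad(1)] gh(2) m(1)] by simp
      also have "\<dots> = Comp C m (Comp C q h')" using pbd(3) by simp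
      also have "\<dots> = Comp C u h'" using assoc[OF pbd(2) q m(1)] m(2) by simp
      finally show ?thesis .
    qed
    then obtain w where w: "w \<in> hom C B (Dom C k1)" "Comp C k1 w = Comp C g' qb" "Comp C k2 w = h'"
      using pb_ex[OF kp, of "Comp C g' qb" B h'] g'qb pbd(2) u by (auto simp: hom_def)
    have qk: "Comp C q k1 = Comp C q k2" using co unfolding is_coequalizer_def by simp
    have "Comp C (Comp C g qa) qb = Comp C (Comp C h qa) qb"
    proof -
      have "Comp C (Comp C g qa) qb = Comp C q (Comp C g' qb)"
        using assoc[OF pbd(1) pad(2) q] pad(3) by simp
      also have "\<dots> = Comp C q h'" using w assoc[OF w(1) kd(1) q] assoc[OF w(1) kd(2) q] qk by metis
      finally show ?thesis using pbd(3) by simp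
    qed
    then have "Comp C g qa = Comp C h qa"
      using epi[OF rqb pbd(1) comp_in[OF pad(1) gh(1)] hqa] by simp
    then show "g = h" using epi[OF rqa pad(1) gh(1) gh(2)] by simp
  qed
  then show ?thesis using q m rq by blast
qed


theorem proposition7p6:
  fixes C :: "('o, 'a) cat" and \<Sigma> :: "('a \<times> 'a) set"
    and f s f' s' x y :: 'a and X Y X' Y' :: 'o
  assumes "regular_category C"
    and "fibrational C \<Sigma>"
    and "sigma_maltsev C \<Sigma>"
    and "split_epi C f s X Y"
    and "split_epi C f' s' X' Y'"
    and "x \<in> hom C X X'" and "regular_epi C x"
    and "y \<in> hom C Y Y'" and "regular_epi C y"
    and "Comp C f' x = Comp C y f"
    and "Comp C x s = Comp C s' y"
    and "(f, s) \<in> \<Sigma>"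
  shows "\<forall>p1 p2 u. is_pullback C y f' p1 p2 \<longrightarrow>
           u \<in> hom C X (Dom C p1) \<longrightarrow> Comp C p1 u = f \<longrightarrow> Comp C p2 u = x \<longrightarrow>
           regular_epi C u"
proof (intro allI impI)
  note rc = assms(1) and sm = assms(3) and xh = assms(6) and rx = assms(7) and yh = assms(8)
    and sq1 = assms(10) and sq2 = assms(11) and sig = assms(12)
  have cat: "category C" using rc unfolding regular_category_def by simp
  note homD = homD[OF cat] and comp_in = comp_in[OF cat] and assoc = assoc[OF cat]
    and pbD = pbD[OF cat] and pb_ex = pb_ex[OF cat] and pb_uniq = pb_uniq[OF cat] and epi = epi[OF cat]
    and idl = idl[OF cat] and idr = idr[OF cat] and id_hom = id_hom[OF cat] and hom_obs = hom_obs[OF cat]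
  have fh: "f \<in> hom C X Y" and sh: "s \<in> hom C Y X" and fs: "Comp C f s = Idt C Y"
    using assms(4) unfolding split_epi_def by auto
  have f'h: "f' \<in> hom C X' Y'" and s'h: "s' \<in> hom C Y' X'" and f's': "Comp C f' s' = Idt C Y'"
    using assms(5) unfolding split_epi_def by auto
  have XO: "X \<in> Ob C" "Y \<in> Ob C" using hom_obs[OF fh] by auto
  fix p1 p2 u
  assume pP: "is_pullback C y f' p1 p2" and uh0: "u \<in> hom C X (Dom C p1)"
    and p1u: "Comp C p1 u = f" and p2u: "Comp C p2 u = x"
  define P where "P = Dom C p1"
  have uh: "u \<in> hom C X P" using uh0 P_def by simp
  have pd: "p1 \<in> hom C P Y" "p2 \<in> hom C P X'" "Comp C y p1 = Comp C f' p2"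
    using pbD[OF pP] yh f'h P_def by (auto simp: hom_def)
  obtain I q m where q: "q \<in> hom C X I" and m: "m \<in> hom C I P" and rq: "regular_epi C q"
    and mm: "mono C m" and mq: "Comp C m q = u"
    using image_fact[OF rc uh] by blast
  have yA: "y \<in> Ar C" using yh by (simp add: hom_def)
  obtain r1 r2 where kp: "is_pullback C y y r1 r2" using regcat_pb[OF rc yA yA] by blast
  define R where "R = Dom C r1"
  have rd: "r1 \<in> hom C R Y" "r2 \<in> hom C R Y" "Comp C y r1 = Comp C y r2"
    using pbD[OF kp] yh R_def by (auto simp: hom_def)
  obtain dl where dl: "dl \<in> hom C Y R" "Comp C r1 dl = Idt C Y" "Comp C r2 dl = Idt C Y"
    using pb_ex[OF kp, of "Idt C Y" Y "Idt C Y"] id_hom[OF XO(2)] yh R_def by (auto simp: hom_def)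
  have p2A: "p2 \<in> Ar C" and xA: "x \<in> Ar C" using pd xh by (auto simp: hom_def)
  obtain ph pi where pQ: "is_pullback C p2 x ph pi"
    using regcat_pb[OF rc p2A xA] pd xh by (auto simp: hom_def)
  have rph: "regular_epi C ph" using regcat_stab[OF rc pQ rx] .
  define Q where "Q = Dom C ph"
  have qd: "ph \<in> hom C Q P" "pi \<in> hom C Q X" "Comp C p2 ph = Comp C x pi"
    using pbD[OF pQ] pd xh Q_def by (auto simp: hom_def)
  have p1ph: "Comp C p1 ph \<in> hom C Q Y" using comp_in[OF qd(1) pd(1)] .
  have fpi: "Comp C f pi \<in> hom C Q Y" using comp_in[OF qd(2) fh] .
  have "Comp C y (Comp C p1 ph) = Comp C y (Comp C f pi)"
    using assoc[OF qd(1) pd(1) yh] assoc[OF qd(1) pd(2) f'h] assoc[OF qd(2) xh f'h] assoc[OF qd(2) fh yh]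
      pd(3) qd(3) sq1 by simp
  then obtain rho where rho: "rho \<in> hom C Q R" "Comp C r1 rho = Comp C p1 ph" "Comp C r2 rho = Comp C f pi"
    using pb_ex[OF kp p1ph[unfolded yh[THEN homD, THEN conjunct2, THEN conjunct1, symmetric]]]
      fpi yh R_def by (auto simp: hom_def)
  have pR: "is_pullback C r2 f rho pi"
    unfolding is_pullback_def
  proof (intro conjI ballI impI)
    show "r2 \<in> Ar C" "f \<in> Ar C" "rho \<in> Ar C" "pi \<in> Ar C" "Cod C r2 = Cod C f" "Dom C rho = Dom C pi"
      "Cod C rho = Dom C r2" "Cod C pi = Dom C f"
      using rd fh rho qd by (auto simp: hom_def)
    show "Comp C r2 rho = Comp C f pi" using rho(3) .
    fix W a b assume W: "W \<in> Ob C" and a0: "a \<in> hom C W (Dom C r2)" and b0: "b \<in> hom C W (Dom C f)"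
      and ab: "Comp C r2 a = Comp C f b"
    have a: "a \<in> hom C W R" and b: "b \<in> hom C W X" using a0 b0 rd fh by (auto simp: hom_def)
    have r1a: "Comp C r1 a \<in> hom C W Y" using comp_in[OF a rd(1)] .
    have xb: "Comp C x b \<in> hom C W X'" using comp_in[OF b xh] .
    have "Comp C y (Comp C r1 a) = Comp C f' (Comp C x b)"
      using assoc[OF a rd(1) yh] assoc[OF a rd(2) yh] rd(3) ab assoc[OF b fh yh] assoc[OF b xh f'h] sq1
      by simp
    then obtain v where v: "v \<in> hom C W P" "Comp C p1 v = Comp C r1 a" "Comp C p2 v = Comp C x b"
      using pb_ex[OF pP, of "Comp C r1 a" W "Comp C x b"] r1a xb yh f'h P_def by (auto simp: hom_def)
    obtain w where w: "w \<in> hom C W Q" "Comp C ph w = v" "Comp C pi w = b"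
      using pb_ex[OF pQ, of v W b] v b pd xh Q_def by (auto simp: hom_def)
    have rw: "Comp C rho w = a"
    proof (rule pb_uniq[OF kp])
      show "Comp C rho w \<in> hom C W (Dom C r1)" using comp_in[OF w(1) rho(1)] R_def by simp
      show "a \<in> hom C W (Dom C r1)" using a R_def by simp
      show "Comp C r1 (Comp C rho w) = Comp C r1 a"
        using assoc[OF w(1) rho(1) rd(1)] rho(2) assoc[OF w(1) qd(1) pd(1)] w v by simp
      show "Comp C r2 (Comp C rho w) = Comp C r2 a"
        using assoc[OF w(1) rho(1) rd(2)] rho(3) assoc[OF w(1) qd(2) fh] w ab by simp
    qed
    show "\<exists>!w. w \<in> hom C W (Dom C rho) \<and> Comp C rho w = a \<and> Comp C pi w = b"
    proof (rule ex1I[where a=w])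
      show "w \<in> hom C W (Dom C rho) \<and> Comp C rho w = a \<and> Comp C pi w = b"
        using w rw rho by (auto simp: hom_def)
      fix w' assume w': "w' \<in> hom C W (Dom C rho) \<and> Comp C rho w' = a \<and> Comp C pi w' = b"
      then have w'h: "w' \<in> hom C W Q" using rho by (auto simp: hom_def)
      have "Comp C ph w' = v"
      proof (rule pb_uniq[OF pP])
        show "Comp C ph w' \<in> hom C W (Dom C p1)" using comp_in[OF w'h qd(1)] P_def by simp
        show "v \<in> hom C W (Dom C p1)" using v P_def by simp
        show "Comp C p1 (Comp C ph w') = Comp C p1 v"
          using assoc[OF w'h qd(1) pd(1)] rho(2) assoc[OF w'h rho(1) rd(1)] w' v by simp
        show "Comp C p2 (Comp C ph w') = Comp C p2 v"
          using assoc[OF w'h qd(1) pd(2)] qd(3) assoc[OF w'h qd(2) xh] w' v by simp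
      qed
      then show "w' = w"
        using pb_uniq[OF pQ, of w' W w] w'h w w' Q_def by simp
    qed
  qed
  have sr2: "Comp C s r2 \<in> hom C R X" using comp_in[OF rd(2) sh] .
  have "Comp C r2 (Idt C R) = Comp C f (Comp C s r2)"
    using idr[OF rd(2)] assoc[OF rd(2) sh fh] fs idl[OF rd(2)] by simp
  then obtain sb where sb: "sb \<in> hom C R Q" "Comp C rho sb = Idt C R" "Comp C pi sb = Comp C s r2"
    using pb_ex[OF pR, of "Idt C R" R "Comp C s r2"] id_hom hom_obs[OF rd(1)] sr2 rd fh rho Q_def
    by (auto simp: hom_def)
  have dlf: "Comp C dl f \<in> hom C X R" using comp_in[OF fh dl(1)] .
  have "Comp C r2 (Comp C dl f) = Comp C f (Idt C X)"
    using assoc[OF fh dl(1) rd(2)] dl(3) idl[OF fh] idr[OF fh] by simp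
  then obtain tb where tb: "tb \<in> hom C X Q" "Comp C rho tb = Comp C dl f" "Comp C pi tb = Idt C X"
    using pb_ex[OF pR, of "Comp C dl f" X "Idt C X"] id_hom[OF XO(1)] dlf rd fh rho Q_def
    by (auto simp: hom_def)
  have se: "split_epi C r2 dl R Y" unfolding split_epi_def using rd dl by auto
  have jee: "jointly_extremally_epic C sb tb"
    using sm unfolding sigma_maltsev_def
    using sig assms(4) se pR sb tb rho Q_def by (auto simp: hom_def)
  have phA: "ph \<in> Ar C" and mA: "m \<in> Ar C" using qd m by (auto simp: hom_def)
  obtain m' n where pM: "is_pullback C ph m m' n"
    using regcat_pb[OF rc phA mA] qd m by (auto simp: hom_def)
  define M where "M = Dom C m'"
  have md: "m' \<in> hom C M Q" "n \<in> hom C M I" "Comp C ph m' = Comp C m n"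
    using pbD[OF pM] qd m M_def by (auto simp: hom_def)
  have mm': "mono C m'" using mono_pb[OF cat pM mm] .
  have sr1: "Comp C s r1 \<in> hom C R X" using comp_in[OF rd(1) sh] .
  have qsr1: "Comp C q (Comp C s r1) \<in> hom C R I" using comp_in[OF sr1 q] .
  have e1: "Comp C ph sb = Comp C m (Comp C q (Comp C s r1))"
  proof (rule pb_uniq[OF pP])
    show "Comp C ph sb \<in> hom C R (Dom C p1)" using comp_in[OF sb(1) qd(1)] P_def by simp
    show "Comp C m (Comp C q (Comp C s r1)) \<in> hom C R (Dom C p1)" using comp_in[OF qsr1 m] P_def by simp
    have mqs: "Comp C m (Comp C q (Comp C s r1)) = Comp C u (Comp C s r1)"
      using assoc[OF sr1 q m] mq by simp
    have "Comp C p1 (Comp C ph sb) = r1"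
      using assoc[OF sb(1) qd(1) pd(1)] rho(2) assoc[OF sb(1) rho(1) rd(1)] sb(2) idr[OF rd(1)] by simp
    moreover have "Comp C p1 (Comp C u (Comp C s r1)) = r1"
      using assoc[OF sr1 uh pd(1)] p1u assoc[OF rd(1) sh fh] fs idl[OF rd(1)] by simp
    ultimately show "Comp C p1 (Comp C ph sb) = Comp C p1 (Comp C m (Comp C q (Comp C s r1)))"
      using mqs by simp
    have "Comp C p2 (Comp C ph sb) = Comp C (Comp C s' y) r1"
      using assoc[OF sb(1) qd(1) pd(2)] qd(3) assoc[OF sb(1) qd(2) xh] sb(3) assoc[OF rd(2) sh xh] sq2
        assoc[OF rd(2) yh s'h] assoc[OF rd(1) yh s'h] rd(3) by simp
    moreover have "Comp C p2 (Comp C u (Comp C s r1)) = Comp C (Comp C s' y) r1"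
      using assoc[OF sr1 uh pd(2)] p2u assoc[OF rd(1) sh xh] sq2 by simp
    ultimately show "Comp C p2 (Comp C ph sb) = Comp C p2 (Comp C m (Comp C q (Comp C s r1)))"
      using mqs by simp
  qed
  have e2: "Comp C ph tb = Comp C m q"
  proof (rule pb_uniq[OF pP])
    show "Comp C ph tb \<in> hom C X (Dom C p1)" using comp_in[OF tb(1) qd(1)] P_def by simp
    show "Comp C m q \<in> hom C X (Dom C p1)" using comp_in[OF q m] P_def by simp
    show "Comp C p1 (Comp C ph tb) = Comp C p1 (Comp C m q)"
      using assoc[OF tb(1) qd(1) pd(1)] rho(2) assoc[OF tb(1) rho(1) rd(1)] tb(2)
        assoc[OF fh dl(1) rd(1)] dl(2) idl[OF fh] mq p1u by simp
    show "Comp C p2 (Comp C ph tb) = Comp C p2 (Comp C m q)"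
      using assoc[OF tb(1) qd(1) pd(2)] qd(3) assoc[OF tb(1) qd(2) xh] tb(3) idr[OF xh] mq p2u by simp
  qed
  obtain a' where a': "a' \<in> hom C R M" "Comp C m' a' = sb"
    using pb_ex[OF pM, of sb R "Comp C q (Comp C s r1)"] sb(1) qsr1 e1 qd m M_def by (auto simp: hom_def)
  obtain b' where b': "b' \<in> hom C X M" "Comp C m' b' = tb"
    using pb_ex[OF pM, of tb X q] tb(1) q e2 qd m M_def by (auto simp: hom_def)
  have "iso C m'"
    using jee mm' md a' b' sb tb unfolding jointly_extremally_epic_def by (auto simp: hom_def)
  then obtain mi where mi: "mi \<in> hom C Q M" "Comp C m' mi = Idt C Q"
    using md unfolding iso_def hom_def by auto
  have nmi: "Comp C n mi \<in> hom C Q I" using comp_in[OF mi(1) md(2)] .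
  have "Comp C m (Comp C n mi) = ph"
    using assoc[OF mi(1) md(2) m] md(3) assoc[OF mi(1) md(1) qd(1)] mi(2) idr[OF qd(1)] by simp
  then have "iso C m" using regepi_mono_iso[OF cat rph qd(1) mm m nmi] by simp
  then show "regular_epi C u" using regepi_iso_comp[OF cat rq q _ m] mq by simp
qed

end
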